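(* Suppose $F,\tilde F\in Sh^{s,0}_{\Lambda_L}(X)\cap Mod(X)$ are related by an exact sequence of one of the forms (1) $0\to\tilde F\to F\to\mathcal{L}_X\to0$, or (2) $0\to\mathcal{L}_X\to F\to\tilde F\to0$, with $\mathcal{L}_X\in loc(X)$. Then a local trivialization $f=(f_1,\dots,f_r)$ of $F$ induces a local trivialization $\tilde f=(\tilde f_1,\dots,\tilde f_r)$ of $\tilde F$ (in case (1) by restriction $\tilde f_s=f_s|_{\tilde V}$, in case (2) by passing to the quotient $\tilde V=V/V_0$, where $V_0\subset V$ is the stalk of $\mathcal{L}_X$), and $\epsilon_{(F,f)}=\epsilon_{(\tilde F,\tilde f)}$.
   Context: $X=\mathbb{R}^3$ or $S^3$, $k$ a field, $(L,L')$ an $r$-component framed oriented link, $L=K_1\sqcup\dots\sqcup K_r$; $loc(X)$ denotes locally constant sheaves on $X$. Sheaves in $Sh^{s,0}_{\Lambda_L}(X)\cap Mod(X)$ (sheaves of $k$-vector spaces with micro-support at infinity in the unit conormal of $L$, microlocally simple with Morse cone in degree $0$) are equivalent to data $(V,\rho,W_s,\rho_s,T_s)$: $\rho:\pi_1(X\setminus L)\to GL(V)$ the local system on the complement, $W_s$ the stalk on $K_s$, $T_s:W_s\to V$ the injective restriction map with one-dimensional cokernel, the meridian of $K_s$ acting trivially on its image and the longitude action intertwining with the monodromy of $K_s$; we view $W_s\subset V$. $A_c$ denotes trivialized parallel transport along a path $c$, $M_t=\rho(m_t)$. A local trivialization is an $r$-tuple of surjective linear maps $f_s:V\to k$ with $f_s|_{W_s}=0$.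 $\epsilon_{(F,f)}$ is the augmentation of the framed cord algebra $\mathrm{Cord}(L)$ given on generators by $\epsilon(c_{st})=f_sA_{c_{st}}(\mathrm{id}_V-M_t)f_t^{-1}$ for framed cords $c_{st}$ from the framing curve of $K_s$ to that of $K_t$, $\epsilon(\lambda_s)=f_sA_{\ell_s}f_s^{-1}$ ($\ell_s$ the longitude loop), $\epsilon(\mu_s)=1-f_s(\mathrm{id}_V-M_s)f_s^{-1}$, where $f_s^{-1}$ is any right inverse of $f_s$. *)

theory Defs
  imports Complex_Main "HOL-Algebra.Group"
begin

text \<open>
Abstract (combinatorial) model of sheaves in Sh^{s,0}_{Lambda_L}(X) \<inter> Mod(X), via the data
(V, rho, W_s, rho_s, T_s) of the paper.  The fundamental group of the link complement is an
abstract group G; m s and l s are the meridian and (framing) longitude of the component K_s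
(s < r).  The stalk V on the complement is the whole type 'v, a vector space over the field
'k with scalar multiplication sc; the stalks W s on K_s are viewed as subspaces of V
(T_s being the inclusion).  Trivialised parallel transport along a path (cord, longitude)
is rho g for the corresponding element g of G.
\<close>

definition rep :: "('g, 'b) monoid_scheme \<Rightarrow> ('k::field \<Rightarrow> 'v::ab_group_add \<Rightarrow> 'v)
    \<Rightarrow> ('g \<Rightarrow> 'v \<Rightarrow> 'v) \<Rightarrow> bool" where
  "rep G sc \<rho> \<longleftrightarrow> Vector_Spaces.vector_space sc \<and>
     (\<forall>g\<in>carrier G. Vector_Spaces.linear sc sc (\<rho> g)) \<and>
     \<rho> \<one>\<^bsub>G\<^esub> = id \<and>
     (\<forall>g\<in>carrier G. \<forall>h\<in>carrier G. \<rho> (g \<otimes>\<^bsub>G\<^esub> h) = \<rho> g \<circ> \<rho> h)"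

text \<open>Object of Sh^{s,0}_{Lambda_L}(X) \<inter> Mod(X): W s is a subspace of V with
one-dimensional cokernel, the meridian of K_s acts trivially on W s, and the longitude action
preserves W s (so that it intertwines with the monodromy of K_s, namely its restriction).\<close>

definition sheaf_datum :: "('g, 'b) monoid_scheme \<Rightarrow> nat \<Rightarrow> ('k::field \<Rightarrow> 'v::ab_group_add \<Rightarrow> 'v)
    \<Rightarrow> ('g \<Rightarrow> 'v \<Rightarrow> 'v) \<Rightarrow> (nat \<Rightarrow> 'g) \<Rightarrow> (nat \<Rightarrow> 'g) \<Rightarrow> (nat \<Rightarrow> 'v set) \<Rightarrow> bool" where
  "sheaf_datum G r sc \<rho> m l W \<longleftrightarrow> rep G sc \<rho> \<and>
     (\<forall>s<r. module.subspace sc (W s) \<and>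
        (\<exists>v. v \<notin> W s \<and> (\<forall>x. \<exists>c. x - sc c v \<in> W s)) \<and>
        (\<forall>w\<in>W s. \<rho> (m s) w = w) \<and>
        (\<forall>w\<in>W s. \<rho> (l s) w \<in> W s))"

definition local_triv :: "nat \<Rightarrow> ('k::field \<Rightarrow> 'v::ab_group_add \<Rightarrow> 'v) \<Rightarrow> (nat \<Rightarrow> 'v set)
    \<Rightarrow> (nat \<Rightarrow> 'v \<Rightarrow> 'k) \<Rightarrow> bool" where
  "local_triv r sc W f \<longleftrightarrow>
     (\<forall>s<r. Vector_Spaces.linear sc ((*)) (f s) \<and> surj (f s) \<and> (\<forall>w\<in>W s. f s w = 0))"

text \<open>Generators of the framed cord algebra: framed cords c_st (their trivialised parallel
transport being given by an element of G), longitudes lambda_s, meridians mu_s.\<close>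

datatype 'g cord_gen = Cord nat nat 'g | Lam nat | Mu nat

definition cord_gens :: "('g, 'b) monoid_scheme \<Rightarrow> nat \<Rightarrow> 'g cord_gen set" where
  "cord_gens G r = {Cord s t g | s t g. s < r \<and> t < r \<and> g \<in> carrier G}
                   \<union> {Lam s | s. s < r} \<union> {Mu s | s. s < r}"

definition rinv :: "(nat \<Rightarrow> 'v \<Rightarrow> 'k::field) \<Rightarrow> nat \<Rightarrow> 'v" where
  "rinv f s = (SOME v. f s v = 1)"

text \<open>The augmentation epsilon_(F,f) on generators (a map k \<rightarrow> k identified with its value at 1).\<close>

fun aug :: "('g \<Rightarrow> 'v::ab_group_add \<Rightarrow> 'v) \<Rightarrow> (nat \<Rightarrow> 'g) \<Rightarrow> (nat \<Rightarrow> 'g)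
    \<Rightarrow> (nat \<Rightarrow> 'v \<Rightarrow> 'k::field) \<Rightarrow> 'g cord_gen \<Rightarrow> 'k" where
  "aug \<rho> m l f (Cord s t g) = f s (\<rho> g (rinv f t - \<rho> (m t) (rinv f t)))"
| "aug \<rho> m l f (Lam s) = f s (\<rho> (l s) (rinv f s))"
| "aug \<rho> m l f (Mu s) = 1 - f s (rinv f s - \<rho> (m s) (rinv f s))"

end

theory Submission
  imports Defs
begin


lemma add_diff_hom:
  fixes h :: "'a::ab_group_add \<Rightarrow> 'b::ab_group_add"
  assumes "\<forall>x y. h (x + y) = h x + h y"
  shows "h (x - y) = h x - h y"
proof -
  have "h x = h ((x - y) + y)" by simp
  also have "\<dots> = h (x - y) + h y" using assms by blast
  finally show ?thesis by (simp add: algebra_simps)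
qed

lemma lin_add: "Vector_Spaces.linear s1 s2 h \<Longrightarrow> h (x + y) = h x + h y"
  by (simp add: Vector_Spaces.linear_iff)

lemma lin_scale: "Vector_Spaces.linear s1 s2 h \<Longrightarrow> h (s1 c x) = s2 c (h x)"
  by (simp add: Vector_Spaces.linear_iff)

lemma lin_diff: "Vector_Spaces.linear s1 s2 h \<Longrightarrow> h (x - y) = h x - h y"
  by (rule add_diff_hom) (simp add: Vector_Spaces.linear_iff)

lemma vs_scale0: "Vector_Spaces.vector_space sc \<Longrightarrow> sc 0 v = 0"
  by (metis module.scale_zero_left module_iff_vector_space)

lemma kerW:
  assumes F: "sheaf_datum G r sc \<rho> m l W" and f: "local_triv r sc W f" and t: "t < r"
    and x: "f t x = 0"
  shows "x \<in> W t"
proof -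
  have vs: "Vector_Spaces.vector_space sc" using F unfolding sheaf_datum_def rep_def by blast
  have lin: "Vector_Spaces.linear sc ((*)) (f t)" and su: "surj (f t)" and z: "\<forall>w\<in>W t. f t w = 0"
    using f t unfolding local_triv_def by auto
  obtain v where v: "v \<notin> W t" and cov: "\<forall>x. \<exists>c. x - sc c v \<in> W t"
    using F t unfolding sheaf_datum_def by blast
  have fx: "\<And>y. \<exists>c. f t y = c * f t v"
  proof -
    fix y obtain c where "y - sc c v \<in> W t" using cov by blast
    then have "f t (y - sc c v) = 0" using z by blast
    then have "f t y = c * f t v" using lin_diff[OF lin] lin_scale[OF lin] by simp
    then show "\<exists>c. f t y = c * f t v" by blast
  qed
  have nz: "f t v \<noteq> 0"
  proof
    assume "f t v = 0"
    obtain y where "f t y = 1" using su by (metis surjD)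
    then show False using fx[of y] \<open>f t v = 0\<close> by auto
  qed
  obtain c where c: "x - sc c v \<in> W t" using cov by blast
  then have "f t (x - sc c v) = 0" using z by blast
  then have "c * f t v = 0" using x lin_diff[OF lin] lin_scale[OF lin] by simp
  then have "c = 0" using nz by simp
  then show ?thesis using c vs_scale0[OF vs] by simp
qed

lemma key:
  assumes G: "group G" and ml: "\<forall>s<r. m s \<in> carrier G \<and> l s \<in> carrier G \<and> m s \<otimes>\<^bsub>G\<^esub> l s = l s \<otimes>\<^bsub>G\<^esub> m s"
    and F: "sheaf_datum G r sc \<rho> m l W" and f: "local_triv r sc W f" and t: "t < r"
    and v: "f t v = 1" and v': "f t v' = 1"
  shows "v - \<rho> (m t) v = v' - \<rho> (m t) v'"
    and "f t (\<rho> (l t) v) = f t (\<rho> (l t) v')"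
proof -
  have lin: "Vector_Spaces.linear sc ((*)) (f t)" using f t unfolding local_triv_def by auto
  have "f t (v - v') = 0" using v v' lin_diff[OF lin] by simp
  then have W: "v - v' \<in> W t" using kerW[OF F f t] by blast
  have rl: "\<forall>g\<in>carrier G. Vector_Spaces.linear sc sc (\<rho> g)" using F unfolding sheaf_datum_def rep_def by blast
  have linm: "Vector_Spaces.linear sc sc (\<rho> (m t))" using rl ml t by blast
  have linl: "Vector_Spaces.linear sc sc (\<rho> (l t))" using rl ml t by blast
  have "\<rho> (m t) (v - v') = v - v'" using W F t unfolding sheaf_datum_def by blast
  then show "v - \<rho> (m t) v = v' - \<rho> (m t) v'" using lin_diff[OF linm] by (simp add: algebra_simps)
  have "\<rho> (l t) (v - v') \<in> W t" using W F t unfolding sheaf_datum_def by blast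
  then have "f t (\<rho> (l t) (v - v')) = 0" using f t unfolding local_triv_def by blast
  then show "f t (\<rho> (l t) v) = f t (\<rho> (l t) v')" using lin_diff[OF linl] lin_diff[OF lin] by simp
qed

theorem proposition4p7:
  fixes G :: "('g, 'b) monoid_scheme" and r :: nat
    and m l :: "nat \<Rightarrow> 'g"
    and sc :: "'k::field \<Rightarrow> 'v::ab_group_add \<Rightarrow> 'v" and \<rho> :: "'g \<Rightarrow> 'v \<Rightarrow> 'v"
    and W :: "nat \<Rightarrow> 'v set"
    and sct :: "'k \<Rightarrow> 'w::ab_group_add \<Rightarrow> 'w" and \<rho>t :: "'g \<Rightarrow> 'w \<Rightarrow> 'w"
    and Wt :: "nat \<Rightarrow> 'w set"
    and scu :: "'k \<Rightarrow> 'u::ab_group_add \<Rightarrow> 'u"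
    and f :: "nat \<Rightarrow> 'v \<Rightarrow> 'k"
  assumes G: "group G"
    and ml: "\<forall>s<r. m s \<in> carrier G \<and> l s \<in> carrier G \<and> m s \<otimes>\<^bsub>G\<^esub> l s = l s \<otimes>\<^bsub>G\<^esub> m s"
    and F: "sheaf_datum G r sc \<rho> m l W"
    and Ft: "sheaf_datum G r sct \<rho>t m l Wt"
    and Lsp: "Vector_Spaces.vector_space scu"
    and f: "local_triv r sc W f"
  shows
    "(\<forall>(i :: 'w \<Rightarrow> 'v) (q :: 'v \<Rightarrow> 'u).
        Vector_Spaces.linear sct sc i \<and> inj i \<and> Vector_Spaces.linear sc scu q \<and> surj q \<and> range i = {v. q v = 0} \<and>
        (\<forall>g\<in>carrier G. \<forall>x. i (\<rho>t g x) = \<rho> g (i x)) \<and>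
        (\<forall>g\<in>carrier G. \<forall>v. q (\<rho> g v) = q v) \<and>
        (\<forall>s<r. i ` Wt s \<subseteq> W s \<and> q ` W s = UNIV \<and> (\<forall>w\<in>W s. q w = 0 \<longrightarrow> w \<in> i ` Wt s))
      \<longrightarrow> local_triv r sct Wt (\<lambda>s. f s \<circ> i) \<and>
          (\<forall>x\<in>cord_gens G r. aug \<rho>t m l (\<lambda>s. f s \<circ> i) x = aug \<rho> m l f x))
   \<and>
    (\<forall>(j :: 'u \<Rightarrow> 'v) (p :: 'v \<Rightarrow> 'w).
        Vector_Spaces.linear scu sc j \<and> inj j \<and> Vector_Spaces.linear sc sct p \<and> surj p \<and> range j = {v. p v = 0} \<and>
        (\<forall>g\<in>carrier G. \<forall>u. \<rho> g (j u) = j u) \<and>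
        (\<forall>g\<in>carrier G. \<forall>v. p (\<rho> g v) = \<rho>t g (p v)) \<and>
        (\<forall>s<r. range j \<subseteq> W s \<and> p ` W s = Wt s)
      \<longrightarrow> (\<exists>ft. \<forall>s<r. \<forall>v. ft s (p v) = f s v) \<and>
          (\<forall>ft. (\<forall>s<r. \<forall>v. ft s (p v) = f s v) \<longrightarrow>
             local_triv r sct Wt ft \<and>
             (\<forall>x\<in>cord_gens G r. aug \<rho>t m l ft x = aug \<rho> m l f x)))"
  proof (intro conjI allI impI)
  have rl: "\<forall>g\<in>carrier G. Vector_Spaces.linear sc sc (\<rho> g)" using F unfolding sheaf_datum_def rep_def by blast
  have vst: "Vector_Spaces.vector_space sct" using Ft unfolding sheaf_datum_def rep_def by blast
  have fs: "\<And>s. s < r \<Longrightarrow> Vector_Spaces.linear sc ((*)) (f s) \<and> surj (f s) \<and> (\<forall>w\<in>W s. f s w = 0)"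
    using f unfolding local_triv_def by blast
  have f1: "\<And>t. t < r \<Longrightarrow> f t (rinv f t) = 1"
    unfolding rinv_def by (rule someI_ex) (use fs in \<open>metis surjD\<close>)
  {
    fix i :: "'w \<Rightarrow> 'v" and q :: "'v \<Rightarrow> 'u"
    assume H: "Vector_Spaces.linear sct sc i \<and> inj i \<and> Vector_Spaces.linear sc scu q \<and> surj q \<and> range i = {v. q v = 0} \<and>
        (\<forall>g\<in>carrier G. \<forall>x. i (\<rho>t g x) = \<rho> g (i x)) \<and>
        (\<forall>g\<in>carrier G. \<forall>v. q (\<rho> g v) = q v) \<and>
        (\<forall>s<r. i ` Wt s \<subseteq> W s \<and> q ` W s = UNIV \<and> (\<forall>w\<in>W s. q w = 0 \<longrightarrow> w \<in> i ` Wt s))"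
    have li: "Vector_Spaces.linear sct sc i" using H by blast
    have lq: "Vector_Spaces.linear sc scu q" using H by blast
    have ex1: "\<exists>y. f s (i y) = 1" if s: "s < r" for s
    proof -
      obtain v where v: "f s v = 1" using fs[OF s] by (metis surjD)
      have "q v \<in> q ` W s" using H s by blast
      then obtain w where w: "w \<in> W s" "q w = q v" by (rule imageE) simp
      have "q (v - w) = 0" using w lin_diff[OF lq] by simp
      then obtain y where y: "v - w = i y" using H by blast
      have "f s (i y) = f s v - f s w" unfolding y[symmetric] by (rule lin_diff[OF conjunct1[OF fs[OF s]]])
      then show ?thesis using v w fs[OF s] by auto
    qed
    show "local_triv r sct Wt (\<lambda>s. f s \<circ> i)"
      unfolding local_triv_def
    proof (intro allI impI conjI)
      fix s assume s: "s < r"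
      show lc: "Vector_Spaces.linear sct (*) (f s \<circ> i)"
        using Vector_Spaces.linear_compose[OF li conjunct1[OF fs[OF s]]] .
      obtain y where y: "f s (i y) = 1" using ex1[OF s] by blast
      show "surj (f s \<circ> i)"
      proof (rule surjI)
        fix c show "(f s \<circ> i) (sct c y) = c" using lin_scale[OF lc, of c y] y by simp
      qed
      show "\<forall>w\<in>Wt s. (f s \<circ> i) w = 0"
      proof
        fix w assume "w \<in> Wt s"
        then have "i w \<in> W s" using H s by blast
        then show "(f s \<circ> i) w = 0" using fs[OF s] by simp
      qed
    qed
    show "\<forall>x\<in>cord_gens G r. aug \<rho>t m l (\<lambda>s. f s \<circ> i) x = aug \<rho> m l f x"
    proof
      fix x assume x: "x \<in> cord_gens G r"
      have y1: "f t (i (rinv (\<lambda>s. f s \<circ> i) t)) = 1" if t: "t < r" for t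
        unfolding rinv_def using someI_ex[OF ex1[OF t]] by simp
      have mt: "\<And>t. t < r \<Longrightarrow> i (y - \<rho>t (m t) y) = i y - \<rho> (m t) (i y)" for y
      proof -
        fix t assume t: "t < r"
        have "m t \<in> carrier G" using ml t by blast
        then have "i (\<rho>t (m t) y) = \<rho> (m t) (i y)" using H by blast
        then show "i (y - \<rho>t (m t) y) = i y - \<rho> (m t) (i y)" using lin_diff[OF li] by simp
      qed
      show "aug \<rho>t m l (\<lambda>s. f s \<circ> i) x = aug \<rho> m l f x"
        using x unfolding cord_gens_def
      proof (elim UnE CollectE exE conjE)
        fix s t g assume e: "x = Cord s t g" and st: "s < r" "t < r" and g: "g \<in> carrier G"
        let ?y = "rinv (\<lambda>s. f s \<circ> i) t"
        have "i (\<rho>t g (?y - \<rho>t (m t) ?y)) = \<rho> g (i (?y - \<rho>t (m t) ?y))" using H g by blast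
        then show ?thesis using e mt[OF st(2)] key(1)[OF G ml F f st(2) y1[OF st(2)] f1[OF st(2)]] by simp
      next
        fix s assume e: "x = Lam s" and s: "s < r"
        let ?y = "rinv (\<lambda>s. f s \<circ> i) s"
        have "l s \<in> carrier G" using ml s by blast
        then have "i (\<rho>t (l s) ?y) = \<rho> (l s) (i ?y)" using H by blast
        then show ?thesis using e key(2)[OF G ml F f s y1[OF s] f1[OF s]] by simp
      next
        fix s assume e: "x = Mu s" and s: "s < r"
        show ?thesis using e mt[OF s] key(1)[OF G ml F f s y1[OF s] f1[OF s]] by simp
      qed
    qed
  }
  {
    fix j :: "'u \<Rightarrow> 'v" and p :: "'v \<Rightarrow> 'w"
    assume H: "Vector_Spaces.linear scu sc j \<and> inj j \<and> Vector_Spaces.linear sc sct p \<and> surj p \<and> range j = {v. p v = 0} \<and>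
        (\<forall>g\<in>carrier G. \<forall>u. \<rho> g (j u) = j u) \<and>
        (\<forall>g\<in>carrier G. \<forall>v. p (\<rho> g v) = \<rho>t g (p v)) \<and>
        (\<forall>s<r. range j \<subseteq> W s \<and> p ` W s = Wt s)"
    have lp: "Vector_Spaces.linear sc sct p" using H by blast
    have sp: "surj p" using H by blast
    have HW: "\<forall>s<r. range j \<subseteq> W s \<and> p ` W s = Wt s" using H by (elim conjE) assumption
    have Hp: "\<forall>g\<in>carrier G. \<forall>v. p (\<rho> g v) = \<rho>t g (p v)" using H by (elim conjE) assumption
    have wd: "f s v = f s v'" if s: "s < r" and e: "p v = p v'" for s v v'
    proof -
      have "p (v - v') = 0" using e lin_diff[OF lp] by simp
      then have "v - v' \<in> range j" using H by (simp only: mem_Collect_eq)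
      moreover have "range j \<subseteq> W s" using HW s by simp
      ultimately have "v - v' \<in> W s" by blast
      then have "f s (v - v') = 0" using fs[OF s] by blast
      then show ?thesis using lin_diff[OF conjunct1[OF fs[OF s]]] by simp
    qed
    have ps: "\<And>w. p (SOME v. p v = w) = w" by (rule someI_ex) (use sp in \<open>metis surjD\<close>)
    show "\<exists>ft. \<forall>s<r. \<forall>v. ft s (p v) = f s v"
      by (rule exI[of _ "\<lambda>s w. f s (SOME v. p v = w)"]) (intro allI impI, rule wd, assumption, rule ps)
    fix ft assume ft: "\<forall>s<r. \<forall>v. ft s (p v) = f s v"
    show "local_triv r sct Wt ft"
      unfolding local_triv_def
    proof (intro allI impI conjI)
      fix s assume s: "s < r"
      have lf: "Vector_Spaces.linear sc (*) (f s)" using fs[OF s] by blast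
      have vsk: "Vector_Spaces.vector_space ((*) :: 'k \<Rightarrow> 'k \<Rightarrow> 'k)"
        using lf unfolding Vector_Spaces.linear_iff by blast
      show "Vector_Spaces.linear sct (*) (ft s)"
        unfolding Vector_Spaces.linear_iff
      proof (intro conjI allI vst vsk)
        fix x y
        obtain a b where ab: "x = p a" "y = p b" using sp by (metis surjD)
        have "ft s (x + y) = ft s (p (a + b))" using ab lin_add[OF lp, of a b] by simp
        also have "\<dots> = f s a + f s b" using ft s lin_add[OF lf] by simp
        finally show "ft s (x + y) = ft s x + ft s y" using ab ft s by simp
      next
        fix c x
        obtain a where a: "x = p a" using sp by (metis surjD)
        have "ft s (sct c x) = ft s (p (sc c a))" using a lin_scale[OF lp, of c a] by simp
        also have "\<dots> = c * f s a" using ft s lin_scale[OF lf] by simp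
        finally show "ft s (sct c x) = c * ft s x" using a ft s by simp
      qed
      show "surj (ft s)"
        unfolding surj_def
      proof
        fix c
        obtain a where "f s a = c" using fs[OF s] by (metis surjD)
        then have "c = ft s (p a)" using ft s by simp
        then show "\<exists>x. c = ft s x" by blast
      qed
      show "\<forall>w\<in>Wt s. ft s w = 0"
      proof
        fix w assume "w \<in> Wt s"
        moreover have "Wt s = p ` W s" using HW s by simp
        ultimately obtain v where "v \<in> W s" "w = p v" by blast
        then show "ft s w = 0" using ft s fs[OF s] by simp
      qed
    qed
    show "\<forall>x\<in>cord_gens G r. aug \<rho>t m l ft x = aug \<rho> m l f x"
    proof
      fix x assume x: "x \<in> cord_gens G r"
      have ex: "\<exists>v. p v = rinv ft t \<and> f t v = 1" if t: "t < r" for t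
      proof -
        obtain v0 where v0: "f t v0 = 1" using fs[OF t] by (metis surjD)
        have "ft t (rinv ft t) = 1" unfolding rinv_def by (rule someI[of _ "p v0"]) (use ft t v0 in auto)
        moreover obtain v where pv: "p v = rinv ft t" using sp by (metis surjD)
        moreover have "ft t (p v) = f t v" using ft t by blast
        ultimately have "f t v = 1" by simp
        then show ?thesis using pv by blast
      qed
      have mt: "\<And>t. t < r \<Longrightarrow> \<rho>t g (p v - \<rho>t (m t) (p v)) = p (\<rho> g (v - \<rho> (m t) v))"
        if g: "g \<in> carrier G" for g v
      proof -
        fix t assume t: "t < r"
        have "m t \<in> carrier G" using ml t by blast
        then have "p (\<rho> (m t) v) = \<rho>t (m t) (p v)" using Hp by blast
        then have "p (v - \<rho> (m t) v) = p v - \<rho>t (m t) (p v)" using lin_diff[OF lp] by simp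
        moreover have "p (\<rho> g (v - \<rho> (m t) v)) = \<rho>t g (p (v - \<rho> (m t) v))" using Hp g by blast
        ultimately show "\<rho>t g (p v - \<rho>t (m t) (p v)) = p (\<rho> g (v - \<rho> (m t) v))" by simp
      qed
      show "aug \<rho>t m l ft x = aug \<rho> m l f x"
        using x unfolding cord_gens_def
      proof (elim UnE CollectE exE conjE)
        fix s t g assume e: "x = Cord s t g" and st: "s < r" "t < r" and g: "g \<in> carrier G"
        obtain v where v: "p v = rinv ft t" "f t v = 1" using ex[OF st(2)] by blast
        show ?thesis using e ft st mt[OF g st(2), of v] v key(1)[OF G ml F f st(2) v(2) f1[OF st(2)]] by simp
      next
        fix s assume e: "x = Lam s" and s: "s < r"
        obtain v where v: "p v = rinv ft s" "f s v = 1" using ex[OF s] by blast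
        have "l s \<in> carrier G" using ml s by blast
        then have "p (\<rho> (l s) v) = \<rho>t (l s) (p v)" using Hp by blast
        then show ?thesis using e ft s v key(2)[OF G ml F f s v(2) f1[OF s]] by (metis aug.simps(2))
      next
        fix s assume e: "x = Mu s" and s: "s < r"
        obtain v where v: "p v = rinv ft s" "f s v = 1" using ex[OF s] by blast
        have "m s \<in> carrier G" using ml s by blast
        then have "p (\<rho> (m s) v) = \<rho>t (m s) (p v)" using Hp by blast
        then have "rinv ft s - \<rho>t (m s) (rinv ft s) = p (v - \<rho> (m s) v)"
          using v lin_diff[OF lp] by simp
        then show ?thesis using e ft s key(1)[OF G ml F f s v(2) f1[OF s]] by simp
      qed
    qed
  }
qed

end
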